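(* Let $r,u>0$, $0<\alpha\le 2$, $\eta>0$ and $s\in\mathbb{C}\setminus\{0\}$. Then there exists $M>0$ such that \[ F^{\alpha}_{s,r}\circ F^{\alpha}_{us,u}=F^{\alpha}_{us,ur}\quad\text{on }\Gamma_{\eta,M} \] (all three functions, and the composition, being well defined there).
   Context: Branch conventions: for $w\in\mathbb{C}\setminus[0,\infty)$ and $p\in\{\alpha,1/\alpha\}$, $w^{p}:=e^{p\log_{(1)}w}$, where $\log_{(1)}$ is the branch of the logarithm with imaginary part in $(0,2\pi)$; for $w\in\mathbb{C}\setminus(-\infty,0]$, $w^{1/r}:=e^{\frac1r\operatorname{Log}w}$ with the principal logarithm (imaginary part in $(-\pi,\pi)$); $r^{1/\alpha}>0$ denotes the positive root. For $\eta,M>0$ let $\Gamma_{\eta,M}=\{z\in\mathbb{C}:\operatorname{Im}z>M,\ \operatorname{Im}z>\eta|\operatorname{Re}z|\}$. For $0<\alpha\le2$, $r>0$, $s\in\mathbb{C}\setminus\{0\}$ define \[ G^{\alpha}_{s,r}(z)=-r^{1/\alpha}\left(\frac{1-\big(1-s(-\tfrac1z)^{\alpha}\big)^{1/r}}{s}\right)^{1/\alpha}. \] For every $\eta>0$ there is $M>0$ such that on $\Gamma_{\eta,M}$ every power in this formula is applied to a point in the domain of its branch, so $G^\alpha_{s,r}$ is analytic and nonvanishing there; set $F^{\alpha}_{s,r}:=1/G^{\alpha}_{s,r}$ on such a domain. *)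

theory Defs
  imports "HOL-Analysis.Analysis"
begin

(* branch of log with imaginary part in (0, 2 pi), on C \ [0,oo) *)
definition log1 :: "complex \<Rightarrow> complex" where
  "log1 w = Ln (- w) + \<i> * complex_of_real pi"

definition pow1 :: "complex \<Rightarrow> real \<Rightarrow> complex" where
  "pow1 w p = exp (complex_of_real p * log1 w)"

definition ppow :: "complex \<Rightarrow> real \<Rightarrow> complex" where
  "ppow w p = exp (complex_of_real p * Ln w)"

definition nonneg_reals :: "complex set" where
  "nonneg_reals = {w. Im w = 0 \<and> 0 \<le> Re w}"

definition nonpos_reals :: "complex set" where
  "nonpos_reals = {w. Im w = 0 \<and> Re w \<le> 0}"

definition G_fun :: "real \<Rightarrow> complex \<Rightarrow> real \<Rightarrow> complex \<Rightarrow> complex" where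
  "G_fun \<alpha> s r z =
     - complex_of_real (r powr (1 / \<alpha>)) *
       pow1 ((1 - ppow (1 - s * pow1 (- 1 / z) \<alpha>) (1 / r)) / s) (1 / \<alpha>)"

definition F_fun :: "real \<Rightarrow> complex \<Rightarrow> real \<Rightarrow> complex \<Rightarrow> complex" where
  "F_fun \<alpha> s r z = 1 / G_fun \<alpha> s r z"

(* every power in the formula of G is applied to a point of the domain of its branch,
   and G does not vanish, so F = 1/G is well defined at z *)
definition well_defined_at :: "real \<Rightarrow> complex \<Rightarrow> real \<Rightarrow> complex \<Rightarrow> bool" where
  "well_defined_at \<alpha> s r z \<longleftrightarrow>
     z \<noteq> 0 \<and>
     - 1 / z \<notin> nonneg_reals \<and>
     1 - s * pow1 (- 1 / z) \<alpha> \<notin> nonpos_reals \<and>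
     (1 - ppow (1 - s * pow1 (- 1 / z) \<alpha>) (1 / r)) / s \<notin> nonneg_reals \<and>
     G_fun \<alpha> s r z \<noteq> 0"

definition Gamma_dom :: "real \<Rightarrow> real \<Rightarrow> complex set" where
  "Gamma_dom \<eta> M = {z. Im z > M \<and> Im z > \<eta> * \<bar>Re z\<bar>}"

end

theory Submission
  imports Defs
begin

lemma log1_eq:
  assumes "exp T = y" "0 < Im T" "Im T < 2*pi"
  shows "log1 y = T"
proof -
  have "- y = exp (T - \<i> * complex_of_real pi)"
    using assms(1) by (simp add: exp_diff)
  moreover have "Ln (exp (T - \<i> * complex_of_real pi)) = T - \<i> * complex_of_real pi"
    using assms by (intro Ln_exp) auto
  ultimately show ?thesis unfolding log1_def by simp
qed

lemma exp_not_nonneg: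
  assumes "0 < Im T" "Im T < 2*pi"
  shows "exp T \<notin> nonneg_reals"
proof
  assume h: "exp T \<in> nonneg_reals"
  have l: "log1 (exp T) = T" using assms by (intro log1_eq) auto
  have ne: "exp T \<noteq> 0" by simp
  have "Im (Ln (- exp T)) = pi"
    using h ne by (subst Im_Ln_eq_pi) (auto simp: nonneg_reals_def complex_eq_iff)
  then have "Im (log1 (exp T)) = 2*pi" unfolding log1_def by simp
  with l assms show False by simp
qed

lemma exp_not_nonpos:
  assumes "\<bar>Im T\<bar> < pi"
  shows "exp T \<notin> nonpos_reals"
proof
  assume h: "exp T \<in> nonpos_reals"
  have l: "Ln (exp T) = T" using assms by (intro Ln_exp) auto
  have ne: "exp T \<noteq> 0" by simp
  have "Im (Ln (exp T)) = pi"
    using h ne by (subst Im_Ln_eq_pi) (auto simp: nonpos_reals_def complex_eq_iff)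
  with l assms show False by simp
qed

lemma G_form:
  fixes \<alpha> r' \<gamma> :: real and s' z L q :: complex
  assumes r: "r' > 0" and a: "0 < \<alpha>" "\<alpha> \<le> 2" and s: "s' \<noteq> 0" and g: "0 < \<gamma>"
    and L: "\<gamma> < Im L" "Im L < pi - \<gamma>"
    and wL: "exp L = -1/z" "log1 (-1/z) = L"
    and x: "norm (s' * exp (of_real \<alpha> * L)) < 1"
    and qdef: "q = (1 - ppow (1 - s' * exp (of_real \<alpha> * L)) (1/r')) * r' / (s' * exp (of_real \<alpha> * L))"
    and q0: "q \<noteq> 0" and Lam: "\<bar>Im (Ln q)\<bar> < \<alpha>*\<gamma>/2"
  shows "well_defined_at \<alpha> s' r' z"
    and "(1 - ppow (1 - s' * pow1 (-1/z) \<alpha>) (1/r')) / s' = exp (of_real \<alpha> * L - of_real (ln r') + Ln q)"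
    and "G_fun \<alpha> s' r' z = - exp (L + Ln q / of_real \<alpha>)"
proof -
  define v where "v = exp (of_real \<alpha> * L)"
  have pv: "pow1 (-1/z) \<alpha> = v" unfolding pow1_def v_def wL(2) ..
  have v0: "v \<noteq> 0" unfolding v_def by simp
  define T where "T = of_real \<alpha> * L - of_real (ln r') + Ln q"
  have phi: "(1 - ppow (1 - s' * v) (1/r')) / s' = exp T"
  proof -
    have "1 - ppow (1 - s' * v) (1/r') = q * (s' * v) / r'"
      using qdef r s v0 unfolding v_def[symmetric] by (simp add: field_simps)
    then have "(1 - ppow (1 - s' * v) (1/r')) / s' = q * v / r'" using s by simp
    also have "\<dots> = exp (Ln q) * v * exp (- of_real (ln r'))"
      proof -
      have "exp (- complex_of_real (ln r')) = 1 / of_real r'"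
        using r by (simp add: exp_minus exp_of_real divide_inverse)
      then show ?thesis using q0 r by simp
    qed
    also have "\<dots> = exp T"
    proof -
      have "T = of_real \<alpha> * L + (- of_real (ln r')) + Ln q" unfolding T_def by simp
      then have "exp T = exp (of_real \<alpha> * L) * exp (- of_real (ln r')) * exp (Ln q)"
        by (simp only: exp_add)
      then show ?thesis unfolding v_def by (simp add: mult_ac)
    qed
    finally show ?thesis .
  qed
  have ImT: "Im T = \<alpha> * Im L + Im (Ln q)" unfolding T_def by simp
  have f1: "\<alpha> * \<gamma> < \<alpha> * Im L" using a L by simp
  have f2: "\<alpha> * Im L < \<alpha> * (pi - \<gamma>)" using a L by simp
  have f3: "\<alpha> * pi \<le> 2 * pi" using a by simp
  have f4: "- (\<alpha>*\<gamma>/2) < Im (Ln q)" "Im (Ln q) < \<alpha>*\<gamma>/2" using Lam by (auto simp: abs_less_iff)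
  have f5: "\<alpha> * (pi - \<gamma>) = \<alpha> * pi - \<alpha> * \<gamma>" by (simp add: algebra_simps)
  have f6: "0 < \<alpha> * \<gamma>" using a g by simp
  have T1: "0 < Im T" "Im T < 2*pi" unfolding ImT using f1 f2 f3 f4 f5 f6 by linarith+
  have lT: "log1 (exp T) = T" using T1 by (intro log1_eq) auto
  have z0: "z \<noteq> 0" proof assume "z = 0" then show False using wL(1) by simp qed
  have L1: "0 < Im L" "Im L < 2*pi" using L g by auto
  have wnn: "-1/z \<notin> nonneg_reals" using exp_not_nonneg[OF L1] wL(1) by simp
  have xnp: "1 - s' * v \<notin> nonpos_reals"
  proof
    assume "1 - s' * v \<in> nonpos_reals"
    then have "Re (1 - s' * v) \<le> 0" by (simp add: nonpos_reals_def)
    moreover have "Re (s' * v) \<le> norm (s' * v)" by (rule complex_Re_le_cmod)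
    ultimately show False using x unfolding v_def by simp
  qed
  have G: "G_fun \<alpha> s' r' z = - exp (L + Ln q / of_real \<alpha>)"
  proof -
    have "G_fun \<alpha> s' r' z = - complex_of_real (r' powr (1 / \<alpha>)) * exp (of_real (1/\<alpha>) * T)"
      unfolding G_fun_def pv phi by (simp only: pow1_def lT)
    also have "complex_of_real (r' powr (1 / \<alpha>)) = exp (of_real (ln r' / \<alpha>))"
      using r by (simp add: powr_def flip: exp_of_real)
    also have "- exp (of_real (ln r' / \<alpha>)) * exp (of_real (1/\<alpha>) * T) = - exp (of_real (ln r' / \<alpha>) + of_real (1/\<alpha>) * T)"
      by (simp add: exp_add)
    also have "of_real (ln r' / \<alpha>) + of_real (1/\<alpha>) * T = L + Ln q / of_real \<alpha>"
      unfolding T_def using a by (simp add: field_simps)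
    finally show ?thesis .
  qed
  show "well_defined_at \<alpha> s' r' z"
    unfolding well_defined_at_def pv phi G using z0 wnn xnp exp_not_nonneg[OF T1] by simp
  show "(1 - ppow (1 - s' * pow1 (-1/z) \<alpha>) (1/r')) / s' = exp (of_real \<alpha> * L - of_real (ln r') + Ln q)"
    using phi pv T_def by simp
  show "G_fun \<alpha> s' r' z = - exp (L + Ln q / of_real \<alpha>)" by (rule G)
qed

lemma exp_log1: "w \<noteq> 0 \<Longrightarrow> exp (log1 w) = w"
  unfolding log1_def by (simp add: exp_add)

lemma angle_aux:
  fixes t \<eta> :: real
  assumes "\<eta> > 0" "0 < t" "t \<le> arctan \<eta>"
  shows "sin t \<le> \<eta> * cos t"
proof -
  have a: "arctan \<eta> < pi/2" by (rule arctan_ubound)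
  have c: "cos t > 0" using assms a by (intro cos_gt_zero_pi) auto
  have "tan t \<le> tan (arctan \<eta>)" using assms a by (intro tan_mono_le) auto
  then have "tan t \<le> \<eta>" by (simp only: tan_arctan)
  then have "sin t / cos t \<le> \<eta>" by (simp add: tan_def)
  then show ?thesis using c by (simp add: divide_le_eq mult.commute)
qed

lemma angle:
  fixes \<eta> M :: real and z :: complex
  assumes eta: "\<eta> > 0" and z: "z \<in> Gamma_dom \<eta> M" and M: "M > 0"
  shows "exp (log1 (-1/z)) = -1/z" "arctan \<eta> < Im (log1 (-1/z))"
    "Im (log1 (-1/z)) < pi - arctan \<eta>" "norm (-1/z) < 1/M" "-1/z \<noteq> 0"
proof -
  have zI: "Im z > M" "Im z > \<eta> * \<bar>Re z\<bar>" using z by (auto simp: Gamma_dom_def)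
  have z0: "z \<noteq> 0" using zI M by auto
  define w where "w = -1/z"
  have w0: "w \<noteq> 0" using z0 unfolding w_def by simp
  show "-1/z \<noteq> 0" using w0 w_def by simp
  have nz: "norm z > M" using zI abs_Im_le_cmod[of z] by linarith
  show "norm (-1/z) < 1/M" using nz M z0 by (simp add: norm_divide divide_strict_left_mono)
  define L where "L = log1 w"
  have eL: "exp L = w" using exp_log1[OF w0] unfolding L_def .
  then show "exp (log1 (-1/z)) = -1/z" unfolding L_def w_def .
  define t where "t = Im L"
  have wI: "Im w > \<eta> * \<bar>Re w\<bar>"
  proof -
    have n2: "(cmod z)^2 > 0" using z0 by simp
    have "Im w = Im z / (cmod z)^2" "Re w = - Re z / (cmod z)^2"
      unfolding w_def by (simp_all add: Im_divide Re_divide cmod_power2)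
    moreover have "\<eta> * \<bar>Re z\<bar> / (cmod z)^2 < Im z / (cmod z)^2"
      using zI n2 by (simp add: divide_strict_right_mono)
    ultimately show ?thesis using n2 by (simp add: abs_divide abs_minus_cancel)
  qed
  have ReIm: "Im w = exp (Re L) * sin t" "Re w = exp (Re L) * cos t"
    using eL unfolding t_def by (metis Im_exp, metis Re_exp)
  have sc: "sin t > \<eta> * \<bar>cos t\<bar>"
  proof -
    have "exp (Re L) * sin t > \<eta> * (exp (Re L) * \<bar>cos t\<bar>)"
      using wI ReIm by (simp add: abs_mult)
    then show ?thesis by (simp add: algebra_simps)
  qed
  have t1: "0 < t" "t \<le> 2*pi"
    unfolding t_def L_def log1_def using w0 mpi_less_Im_Ln[of "-w"] Im_Ln_le_pi[of "-w"] by auto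
  have sp: "sin t > 0" using sc eta by (smt (verit) abs_ge_zero mult_nonneg_nonneg)
  have tpi: "t < pi"
  proof (rule ccontr)
    assume "\<not> t < pi"
    then have "pi \<le> t" by simp
    moreover have "sin t \<le> 0"
    proof (cases "t = 2*pi")
      case True then show ?thesis by simp
    next
      case False then show ?thesis using \<open>pi \<le> t\<close> t1 by (intro sin_le_zero) auto
    qed
    ultimately show False using sp by simp
  qed
  show "arctan \<eta> < Im (log1 (-1/z))"
  proof (rule ccontr)
    assume "\<not> arctan \<eta> < Im (log1 (-1/z))"
    then have "t \<le> arctan \<eta>" unfolding t_def L_def w_def by simp
    then have "sin t \<le> \<eta> * cos t" using angle_aux eta t1 by blast
    then show False using sc eta by (smt (verit) abs_ge_self mult_left_mono)
  qed
  show "Im (log1 (-1/z)) < pi - arctan \<eta>"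
  proof (rule ccontr)
    assume "\<not> Im (log1 (-1/z)) < pi - arctan \<eta>"
    then have "pi - t \<le> arctan \<eta>" unfolding t_def L_def w_def by simp
    then have "sin (pi - t) \<le> \<eta> * cos (pi - t)" using angle_aux[of \<eta> "pi - t"] eta tpi by linarith
    then have "sin t \<le> \<eta> * (- cos t)" by simp
    then show False using sc eta by (smt (verit) abs_ge_minus_self mult_left_mono)
  qed
qed

lemma q_lim:
  fixes r' :: real assumes r: "r' > 0"
  shows "((\<lambda>x. (1 - ppow (1 - x) (1/r')) * of_real r' / x) \<longlongrightarrow> 1) (at (0::complex))"
proof -
  define f where "f x = exp (of_real (1/r') * Ln (1 - x))" for x :: complex
  have d: "(f has_field_derivative - of_real (1/r')) (at 0)"
    unfolding f_def using r by (auto intro!: derivative_eq_intros)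
  have f0: "f 0 = 1" unfolding f_def by simp
  have "((\<lambda>y. (f y - f 0) / (y - 0)) \<longlongrightarrow> - of_real (1/r')) (at 0)"
    using d by (simp add: has_field_derivative_iff)
  then have "((\<lambda>y. - of_real r' * ((f y - f 0) / (y - 0))) \<longlongrightarrow> - of_real r' * - of_real (1/r')) (at 0)"
    by (intro tendsto_mult_left)
  moreover have "- of_real r' * - of_real (1/r') = (1::complex)" using r by simp
  moreover have "(\<lambda>y. - of_real r' * ((f y - f 0) / (y - 0))) = (\<lambda>x. (1 - ppow (1 - x) (1/r')) * of_real r' / x)"
    unfolding f0 using r by (auto simp: f_def ppow_def field_simps)
  ultimately show ?thesis by simp
qed

lemma small_bound:
  fixes \<alpha> K \<rho> a M :: real
  assumes "0 < \<alpha>" "0 < K" "0 < \<rho>" "0 < a" "a < 1/M" "M = (K/\<rho>) powr (1/\<alpha>) + 1"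
  shows "K * a powr \<alpha> < \<rho>"
proof -
  have M0: "M > 0" using assms(6) powr_ge_zero[of "K/\<rho>" "1/\<alpha>"] by linarith
  have i1: "a powr \<alpha> < (1/M) powr \<alpha>" using assms by (intro powr_less_mono2) auto
  have i2: "(1/M) powr \<alpha> = 1 / M powr \<alpha>" by (simp add: powr_divide)
  have "M powr \<alpha> > ((K/\<rho>) powr (1/\<alpha>)) powr \<alpha>"
    using assms by (intro powr_less_mono2) auto
  then have i3: "M powr \<alpha> > K/\<rho>" using assms by (simp add: powr_powr)
  have "K/\<rho> > 0" "M powr \<alpha> > 0" using assms M0 by auto
  then have "1 / M powr \<alpha> < 1 / (K/\<rho>)" using i3 by (intro divide_strict_left_mono mult_pos_pos) auto
  then have "a powr \<alpha> < \<rho> / K" using i1 i2 by simp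
  then show ?thesis using assms by (simp add: field_simps)
qed

theorem theorem3p1:
  fixes r u \<alpha> \<eta> :: real and s :: complex
  assumes "r > 0" and "u > 0" and "0 < \<alpha>" and "\<alpha> \<le> 2" and "\<eta> > 0" and "s \<noteq> 0"
  shows "\<exists>M>0. \<forall>z\<in>Gamma_dom \<eta> M.
           well_defined_at \<alpha> (complex_of_real u * s) u z \<and>
           well_defined_at \<alpha> (complex_of_real u * s) (u * r) z \<and>
           well_defined_at \<alpha> s r (F_fun \<alpha> (complex_of_real u * s) u z) \<and>
           F_fun \<alpha> s r (F_fun \<alpha> (complex_of_real u * s) u z) =
             F_fun \<alpha> (complex_of_real u * s) (u * r) z"
proof -
  note r = assms(1) and u = assms(2) and a = assms(3,4) and eta = assms(5) and s = assms(6)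
  define \<gamma> where "\<gamma> = arctan \<eta>"
  have g: "0 < \<gamma>" using eta unfolding \<gamma>_def by simp
  define \<beta> where "\<beta> = \<alpha> * \<gamma> / 2"
  have b: "0 < \<beta>" using a g unfolding \<beta>_def by simp
  define s1 where "s1 = complex_of_real u * s"
  have s1: "s1 \<noteq> 0" using u s unfolding s1_def by simp
  have ur: "u * r > 0" using u r by simp
  define Q where "Q p x = (1 - ppow (1 - x) (1/p)) * complex_of_real p / x" for p :: real and x :: complex
  have evQ: "eventually (\<lambda>x. Q p x \<noteq> 0 \<and> \<bar>Im (Ln (Q p x))\<bar> < \<beta>) (at 0)" if p: "p > 0" for p
  proof -
    have l: "(Q p \<longlongrightarrow> 1) (at 0)" using q_lim[OF p] unfolding Q_def .
    have l2: "((\<lambda>x. Ln (Q p x)) \<longlongrightarrow> Ln 1) (at 0)" by (rule tendsto_Ln[OF l]) simp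
    have e1: "eventually (\<lambda>x. dist (Q p x) 1 < 1) (at 0)" by (rule tendstoD[OF l]) simp
    have e2: "eventually (\<lambda>x. dist (Ln (Q p x)) (Ln 1) < \<beta>) (at 0)" by (rule tendstoD[OF l2 b])
    show ?thesis using e1 e2
    proof eventually_elim
      case (elim x)
      then show ?case using abs_Im_le_cmod[of "Ln (Q p x)"] by (auto simp: dist_norm)
    qed
  qed
  have evL: "eventually (\<lambda>x. norm (Ln (1 - x)) < u * pi) (at (0::complex))"
  proof -
    have l: "((\<lambda>x. Ln (1 - x)) \<longlongrightarrow> Ln (1 - 0)) (at (0::complex))"
      by (intro tendsto_Ln tendsto_intros) auto
    have "eventually (\<lambda>x. dist (Ln (1 - x)) (Ln (1 - 0)) < u * pi) (at (0::complex))"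
      by (rule tendstoD[OF l]) (use u in simp)
    then show ?thesis by (simp add: dist_norm)
  qed
  have ev1: "eventually (\<lambda>x. norm x < 1) (at (0::complex))"
  proof -
    have "eventually (\<lambda>x. dist x 0 < 1) (at (0::complex))" by (rule tendstoD[OF tendsto_ident_at]) simp
    then show ?thesis by simp
  qed
  have "eventually (\<lambda>x. norm x < 1 \<and> (Q u x \<noteq> 0 \<and> \<bar>Im (Ln (Q u x))\<bar> < \<beta>) \<and>
      (Q (u*r) x \<noteq> 0 \<and> \<bar>Im (Ln (Q (u*r) x))\<bar> < \<beta>) \<and> norm (Ln (1 - x)) < u * pi) (at (0::complex))"
    using ev1 evQ[OF u] evQ[OF ur] evL by eventually_elim auto
  then obtain \<rho> where rho: "\<rho> > 0" and P: "\<And>x. x \<noteq> 0 \<Longrightarrow> dist x 0 < \<rho> \<Longrightarrow>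
      norm x < 1 \<and> (Q u x \<noteq> 0 \<and> \<bar>Im (Ln (Q u x))\<bar> < \<beta>) \<and>
      (Q (u*r) x \<noteq> 0 \<and> \<bar>Im (Ln (Q (u*r) x))\<bar> < \<beta>) \<and> norm (Ln (1 - x)) < u * pi"
    unfolding eventually_at by auto
  define K where "K = u * norm s"
  have K: "K > 0" using u s unfolding K_def by simp
  define M where "M = (K/\<rho>) powr (1/\<alpha>) + 1"
  have M: "M > 0" unfolding M_def using powr_ge_zero[of "K/\<rho>" "1/\<alpha>"] by linarith
  show ?thesis
  proof (rule exI[of _ M], intro conjI[OF M] ballI)
    fix z assume z: "z \<in> Gamma_dom \<eta> M"
    define L where "L = log1 (-1/z)"
    have eL: "exp L = -1/z" and Lg: "\<gamma> < Im L" "Im L < pi - \<gamma>" and wn: "norm (-1/z) < 1/M"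
      and w0: "-1/z \<noteq> 0"
      using angle[OF eta z M] unfolding L_def \<gamma>_def by auto
    define v where "v = exp (complex_of_real \<alpha> * L)"
    have v0: "v \<noteq> 0" unfolding v_def by simp
    have pv: "pow1 (-1/z) \<alpha> = v" unfolding pow1_def v_def L_def ..
    have ReL: "Re L = ln (norm (-1/z))"
      unfolding L_def log1_def using w0 by simp
    have nv: "norm v = norm (-1/z) powr \<alpha>"
      unfolding v_def norm_exp_eq_Re using w0 by (simp add: ReL powr_def)
    define x where "x = s1 * v"
    have x0: "x \<noteq> 0" unfolding x_def using s1 v0 by simp
    have "norm x = K * norm (-1/z) powr \<alpha>" unfolding x_def s1_def K_def nv[symmetric]
      using u by (simp add: norm_mult)
    also have "\<dots> < \<rho>" using small_bound[OF a(1) K rho _ wn M_def] w0 by simp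
    finally have "dist x 0 < \<rho>" by simp
    note Px = P[OF x0 this]
    have Lam1: "\<bar>Im (Ln (Q u x))\<bar> < \<alpha>*\<gamma>/2" and Lam2: "\<bar>Im (Ln (Q (u*r) x))\<bar> < \<alpha>*\<gamma>/2"
      using Px unfolding \<beta>_def by auto
    have xn: "norm (s1 * exp (complex_of_real \<alpha> * L)) < 1" using Px unfolding x_def v_def by simp
    have Q1: "Q u x = (1 - ppow (1 - s1 * exp (of_real \<alpha> * L)) (1/u)) * u / (s1 * exp (of_real \<alpha> * L))"
      unfolding Q_def x_def v_def ..
    have Q2: "Q (u*r) x = (1 - ppow (1 - s1 * exp (of_real \<alpha> * L)) (1/(u*r))) * (u*r) / (s1 * exp (of_real \<alpha> * L))"
      unfolding Q_def x_def v_def ..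
    note GF1 = G_form[OF u a s1 g Lg eL L_def[symmetric] xn Q1 _ Lam1]
    note GF2 = G_form[OF ur a s1 g Lg eL L_def[symmetric] xn Q2 _ Lam2]
    have WD1: "well_defined_at \<alpha> s1 u z" using GF1 Px by auto
    have WD2: "well_defined_at \<alpha> s1 (u*r) z" using GF2 Px by auto
    have G1: "G_fun \<alpha> s1 u z = - exp (L + Ln (Q u x) / of_real \<alpha>)" using GF1 Px by auto
    have G2: "G_fun \<alpha> s1 (u*r) z = - exp (L + Ln (Q (u*r) x) / of_real \<alpha>)" using GF2 Px by auto
    have phi2: "(1 - ppow (1 - s1 * pow1 (-1/z) \<alpha>) (1/(u*r))) / s1
        = exp (of_real \<alpha> * L - of_real (ln (u*r)) + Ln (Q (u*r) x))" using GF2 Px by auto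
    have FIN: "well_defined_at \<alpha> s1 u z \<and> well_defined_at \<alpha> s1 (u * r) z \<and>
           well_defined_at \<alpha> s r (F_fun \<alpha> s1 u z) \<and>
           F_fun \<alpha> s r (F_fun \<alpha> s1 u z) = F_fun \<alpha> s1 (u * r) z"
    proof -
      define q1 where "q1 = Q u x"
      define q2 where "q2 = Q (u*r) x"
      have q10: "q1 \<noteq> 0" and q20: "q2 \<noteq> 0" using Px unfolding q1_def q2_def by auto
      define L1 where "L1 = L + Ln q1 / of_real \<alpha>"
      define F1 where "F1 = F_fun \<alpha> s1 u z"
      have mF1: "-1/F1 = exp L1" unfolding F1_def F_fun_def G1 L1_def q1_def by simp
      have F10: "F1 \<noteq> 0" unfolding F1_def F_fun_def G1 by simp
      have ImL1: "Im L1 = Im L + Im (Ln q1) / \<alpha>" unfolding L1_def by simp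
      have "\<bar>Im (Ln q1)\<bar> / \<alpha> < \<gamma>/2" using Lam1 a unfolding q1_def by (simp add: divide_less_eq mult.commute)
      then have h: "\<bar>Im (Ln q1) / \<alpha>\<bar> < \<gamma>/2" using a by (simp add: abs_divide)
      then have "- (\<gamma>/2) < Im (Ln q1) / \<alpha>" "Im (Ln q1) / \<alpha> < \<gamma>/2" unfolding abs_less_iff by linarith+
      then have L1b: "0 < Im L1" "Im L1 < 2*pi" unfolding ImL1 using Lg g by linarith+
      have lL1: "log1 (exp L1) = L1" using L1b by (intro log1_eq) auto
      have pF1: "pow1 (-1/F1) \<alpha> = v * q1"
      proof -
        have "pow1 (-1/F1) \<alpha> = exp (of_real \<alpha> * L1)" unfolding mF1 pow1_def lL1 ..
        also have "of_real \<alpha> * L1 = of_real \<alpha> * L + Ln q1" unfolding L1_def using a by (simp add: field_simps)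
        finally show ?thesis unfolding v_def using q10 by (simp add: exp_add)
      qed
      define T1 where "T1 = of_real (1/u) * Ln (1 - x)"
      have A: "1 - s * pow1 (-1/F1) \<alpha> = exp T1"
      proof -
        have "s * (v * q1) = 1 - ppow (1 - x) (1/u)"
          unfolding q1_def Q_def using x0 s u v0 unfolding x_def s1_def by (simp add: field_simps)
        then show ?thesis unfolding pF1 T1_def ppow_def by simp
      qed
      have "\<bar>Im T1\<bar> = \<bar>Im (Ln (1 - x))\<bar> / u" unfolding T1_def using u by (simp add: abs_divide)
      also have "\<dots> \<le> norm (Ln (1 - x)) / u" using u abs_Im_le_cmod by (intro divide_right_mono) auto
      also have "\<dots> < pi" using Px u by (simp add: divide_less_eq mult.commute)
      finally have T1b: "\<bar>Im T1\<bar> < pi" .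
      have pp: "ppow (exp T1) (1/r) = ppow (1 - x) (1/(u*r))"
      proof -
        have "Ln (exp T1) = T1" using T1b by (intro Ln_exp) auto
        then show ?thesis unfolding ppow_def T1_def by (simp add: field_simps)
      qed
      define To where "To = of_real \<alpha> * L - of_real (ln r) + Ln q2"
      have phio: "(1 - ppow (1 - s * pow1 (-1/F1) \<alpha>) (1/r)) / s = exp To"
      proof -
        have "(1 - ppow (1 - s * pow1 (-1/F1) \<alpha>) (1/r)) / s = of_real u * ((1 - ppow (1 - x) (1/(u*r))) / s1)"
          unfolding A pp s1_def
        proof -
          have "complex_of_real u \<noteq> 0" using u by simp
          then show "(1 - ppow (1 - x) (1/(u*r))) / s = of_real u * ((1 - ppow (1 - x) (1/(u*r))) / (complex_of_real u * s))"
            using s by (simp add: field_simps)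
        qed
        also have "(1 - ppow (1 - x) (1/(u*r))) / s1 = exp (of_real \<alpha> * L - of_real (ln (u*r)) + Ln q2)"
          using phi2 unfolding pv x_def q2_def .
        also have "of_real u * exp (of_real \<alpha> * L - of_real (ln (u*r)) + Ln q2)
            = exp (of_real (ln u) + (of_real \<alpha> * L - of_real (ln (u*r)) + Ln q2))"
          using u by (simp add: exp_add exp_of_real)
        also have "of_real (ln u) + (of_real \<alpha> * L - of_real (ln (u*r)) + Ln q2) = To"
          unfolding To_def using u r by (simp add: ln_mult)
        finally show ?thesis .
      qed
      have ImTo: "Im To = \<alpha> * Im L + Im (Ln q2)" unfolding To_def by simp
      have f1: "\<alpha> * \<gamma> < \<alpha> * Im L" using a Lg by simp
      have f2: "\<alpha> * Im L < \<alpha> * (pi - \<gamma>)" using a Lg by simp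
      have f3: "\<alpha> * pi \<le> 2 * pi" using a by simp
      have f4: "- (\<alpha>*\<gamma>/2) < Im (Ln q2)" "Im (Ln q2) < \<alpha>*\<gamma>/2" using Lam2 unfolding q2_def by (auto simp: abs_less_iff)
      have f5: "\<alpha> * (pi - \<gamma>) = \<alpha> * pi - \<alpha> * \<gamma>" by (simp add: algebra_simps)
      have f6: "0 < \<alpha> * \<gamma>" using a g by simp
      have Tob: "0 < Im To" "Im To < 2*pi" unfolding ImTo using f1 f2 f3 f4 f5 f6 by linarith+
      have lTo: "log1 (exp To) = To" using Tob by (intro log1_eq) auto
      have Go: "G_fun \<alpha> s r F1 = - exp (L + Ln q2 / of_real \<alpha>)"
      proof -
        have "G_fun \<alpha> s r F1 = - complex_of_real (r powr (1 / \<alpha>)) * exp (of_real (1/\<alpha>) * To)"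
          unfolding G_fun_def phio by (simp only: pow1_def lTo)
        also have "complex_of_real (r powr (1 / \<alpha>)) = exp (of_real (ln r / \<alpha>))"
          using r by (simp add: powr_def flip: exp_of_real)
        also have "- exp (of_real (ln r / \<alpha>)) * exp (of_real (1/\<alpha>) * To) = - exp (of_real (ln r / \<alpha>) + of_real (1/\<alpha>) * To)"
          by (simp add: exp_add)
        also have "of_real (ln r / \<alpha>) + of_real (1/\<alpha>) * To = L + Ln q2 / of_real \<alpha>"
          unfolding To_def using a by (simp add: field_simps)
        finally show ?thesis .
      qed
      have WDo: "well_defined_at \<alpha> s r F1"
        unfolding well_defined_at_def phio Go A
        using F10 exp_not_nonneg[OF L1b] mF1 exp_not_nonpos[OF T1b] exp_not_nonneg[OF Tob] phio[unfolded A] by simp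
      have Fo: "F_fun \<alpha> s r F1 = F_fun \<alpha> s1 (u * r) z"
        unfolding F_fun_def Go G2 q2_def ..
      show ?thesis using WD1 WD2 WDo Fo unfolding F1_def by simp
    qed
    then show "well_defined_at \<alpha> (complex_of_real u * s) u z \<and>
           well_defined_at \<alpha> (complex_of_real u * s) (u * r) z \<and>
           well_defined_at \<alpha> s r (F_fun \<alpha> (complex_of_real u * s) u z) \<and>
           F_fun \<alpha> s r (F_fun \<alpha> (complex_of_real u * s) u z) =
             F_fun \<alpha> (complex_of_real u * s) (u * r) z" by (simp only: s1_def)
  qed
qed

end
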